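(* Let $G$ be a finite group and $H$ a normal subgroup of $G$ such that $G/H$ is cyclic. Suppose that the cosets $Hx$ and $Hy$ have equal order in the quotient group $G/H$. Then there exists a permutation $\sigma$ of the elements of $G$ such that (1) every subgroup of $G$ is $\sigma$-invariant; (2) for all $g_1,g_2\in G$, $(g_1\sigma)(g_2\sigma)=(g_2\sigma)(g_1\sigma)$ if and only if $g_1g_2=g_2g_1$; (3) $\sigma$ permutes the conjugacy classes of $G$; (4) $(Hx)\sigma = Hy$.
   Context: $g\sigma$ denotes the image of $g$ under $\sigma$. *)

theory Defs
  imports "HOL-Algebra.Algebra"
begin

definition conj_class :: "('a, 'b) monoid_scheme \<Rightarrow> 'a \<Rightarrow> 'a set" where
  "conj_class G a = {inv\<^bsub>G\<^esub> g \<otimes>\<^bsub>G\<^esub> a \<otimes>\<^bsub>G\<^esub> g | g. g \<in> carrier G}"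

definition conj_classes :: "('a, 'b) monoid_scheme \<Rightarrow> 'a set set" where
  "conj_classes G = {conj_class G a | a. a \<in> carrier G}"

end

theory Submission
  imports Defs "HOL-Number_Theory.Number_Theory"
begin

lemma exists_coprime_cong:
  fixes m d N :: nat
  assumes "coprime m d" "N > 0"
  shows "\<exists>k. [k = m] (mod d) \<and> coprime k N"
proof -
  define S where "S = {p. Factorial_Ring.prime p \<and> p dvd N \<and> \<not> p dvd m}"
  have finS: "finite S" unfolding S_def
    by (rule finite_subset[of _ "{..N}"]) (auto dest: dvd_imp_le simp: assms)
  define t where "t = \<Prod>S"
  define k where "k = m + d * t"
  have "coprime k N"
  proof (rule ccontr)
    assume nc: "\<not> coprime k N"
    have "gcd k N \<noteq> 0" using assms(2) gcd_eq_0_iff[of k N] by linarith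
    moreover have "\<not> is_unit (gcd k N)" using nc is_unit_gcd by blast
    ultimately obtain p where p: "p dvd gcd k N" "Factorial_Ring.prime p" using prime_divisor_exists by blast
    hence pk: "p dvd k" and pN: "p dvd N" by auto
    show False
    proof (cases "p dvd m")
      case True
      hence "p dvd d * t" using pk unfolding k_def by (simp add: dvd_add_right_iff)
      hence "p dvd d \<or> p dvd t" using p(2) prime_dvd_mult_iff by blast
      thus False
      proof
        assume "p dvd d"
        with True assms(1) have "is_unit p" using coprime_common_divisor by blast
        with p(2) show False by simp
      next
        assume "p dvd t"
        then obtain q where "q \<in> S" "p dvd q" unfolding t_def
          using prime_dvd_prod_iff[OF finS p(2), of id] by auto
        hence "p = q" using primes_dvd_imp_eq p(2) unfolding S_def by auto
        with \<open>q \<in> S\<close> True show False unfolding S_def by auto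
      qed
    next
      case False
      hence "p \<in> S" using p pN unfolding S_def by auto
      hence "p dvd t" unfolding t_def using finS dvd_prodI[of S p "\<lambda>x. x"] by simp
      hence "p dvd d * t" by simp
      hence "p dvd m" using pk unfolding k_def by (simp add: dvd_add_left_iff)
      with False show False by simp
    qed
  qed
  moreover have "[k = m] (mod d)" unfolding k_def cong_def by simp
  ultimately show ?thesis by blast
qed

lemma exists_coprime_sol:
  fixes a b n N :: nat
  assumes "n > 0" "N > 0" "gcd n a = gcd n b"
  shows "\<exists>k. coprime k N \<and> [a * k = b] (mod n)"
proof -
  define e where "e = gcd n a"
  have e0: "e > 0" using assms e_def by simp
  obtain a' where a': "a = e * a'" unfolding e_def by (metis dvd_def gcd_dvd2)
  obtain b' where b': "b = e * b'" using assms(3) unfolding e_def by (metis dvd_def gcd_dvd2)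
  obtain n' where n': "n = e * n'" unfolding e_def by (metis dvd_def gcd_dvd1)
  have ca: "coprime a' n'"
    using e0 a' n' unfolding e_def
    by (metis div_gcd_coprime gcd.commute gcd_eq_0_iff nonzero_mult_div_cancel_left order_less_irrefl)
  have cb: "coprime b' n'"
    using e0 b' n' assms(3) unfolding e_def
    by (metis div_gcd_coprime gcd.commute gcd_eq_0_iff nonzero_mult_div_cancel_left order_less_irrefl)
  obtain u where u: "[a' * u = Suc 0] (mod n')" using cong_solve_coprime_nat[OF ca] by blast
  have cu: "coprime u n'" using u coprime_iff_invertible_nat[of u n']
    by (metis cong_def mult.commute)
  have cm: "coprime (u * b') n'" using cu cb by simp
  obtain k where k: "[k = u * b'] (mod n')" "coprime k N"
    using exists_coprime_cong[OF cm assms(2)] by blast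
  have "[a' * k = a' * (u * b')] (mod n')" using k(1) by (simp add: cong_scalar_left)
  also have "[a' * (u * b') = Suc 0 * b'] (mod n')" using u
    by (metis cong_scalar_right mult.assoc)
  finally have "[a' * k = b'] (mod n')" by simp
  hence "[e * (a' * k) = e * b'] (mod e * n')" using cong_mult_lcancel_nat cong_def
    by (metis mult_mod_right)
  hence "[a * k = b] (mod n)" using a' b' n' by (simp add: mult.assoc)
  with k(2) show ?thesis by blast
qed

lemma (in group) pow_comm_both:
  assumes "a \<otimes> b = b \<otimes> a" "a \<in> carrier G" "b \<in> carrier G"
  shows "a [^] (m::nat) \<otimes> b [^] (n::nat) = b [^] n \<otimes> a [^] m"
proof -
  have "b [^] n \<otimes> a = a \<otimes> b [^] n" using group_commutes_pow[of b a n] assms by simp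
  then show ?thesis using group_commutes_pow[of a "b [^] n" m] assms by simp
qed

lemma (in group) conj_pow:
  assumes "g \<in> carrier G" "a \<in> carrier G"
  shows "(inv g \<otimes> a \<otimes> g) [^] (n::nat) = inv g \<otimes> a [^] n \<otimes> g"
proof (induction n)
  case 0
  then show ?case using assms by simp
next
  case (Suc n)
  have "(inv g \<otimes> a \<otimes> g) [^] Suc n = (inv g \<otimes> a [^] n \<otimes> g) \<otimes> (inv g \<otimes> a \<otimes> g)"
    using Suc by simp
  also have "\<dots> = inv g \<otimes> a [^] Suc n \<otimes> g"
  proof -
    have aux: "g \<otimes> (inv g \<otimes> z) = z" if "z \<in> carrier G" for z
      using assms that by (simp add: m_assoc[symmetric])
    show ?thesis using assms by (simp add: m_assoc aux)
  qed
  finally show ?case .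
qed

lemma (in group) pow_cong_ord:
  assumes "x \<in> carrier G" "[i = j] (mod ord x)"
  shows "x [^] (i::nat) = x [^] (j::nat)"
proof -
  have "int (ord x) dvd (int j - int i)"
    using assms(2) by (metis cong_iff_dvd_diff cong_int_iff cong_sym)
  then have "x [^] (int i) = x [^] (int j)" using int_pow_eq[OF assms(1)] by blast
  then show ?thesis by (simp add: int_pow_int)
qed

lemma (in group) pow_cong_order:
  assumes "x \<in> carrier G" "[i = j] (mod order G)"
  shows "x [^] (i::nat) = x [^] (j::nat)"
  using pow_cong_ord[OF assms(1)] assms(2) ord_dvd_group_order[OF assms(1)]
  by (meson cong_dvd_modulus_nat)

lemma (in normal) rcos_pow:
  assumes "g \<in> carrier G"
  shows "(H #> g) [^]\<^bsub>G Mod H\<^esub> (n::nat) = H #> (g [^] n)"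
proof (induction n)
  case 0
  then show ?case by (simp add: coset_mult_one subset)
next
  case (Suc n)
  then show ?case using assms by (simp add: rcos_sum)
qed

lemma (in group) int_to_nat_pow:
  assumes c: "c \<in> carrier G" and n0: "ord c > 0"
  shows "\<exists>a::nat. c [^] (i::int) = c [^] a"
proof -
  have m0: "0 \<le> i mod int (ord c)" using n0 by (intro pos_mod_sign) linarith
  have e: "int (nat (i mod int (ord c))) = i mod int (ord c)" using m0 by (rule nat_0_le)
  have "int (ord c) dvd (int (nat (i mod int (ord c))) - i)" unfolding e
    by (metis mod_mod_trivial mod_eq_dvd_iff)
  then have "c [^] i = c [^] (int (nat (i mod int (ord c))))"
    using int_pow_eq[OF c, of i "int (nat (i mod int (ord c)))"] by blast
  then show ?thesis by (metis int_pow_int)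
qed

lemma (in group) subgroup_nat_pow_mem:
  assumes "subgroup K G" "g \<in> K"
  shows "g [^] (n::nat) \<in> K"
proof (induction n)
  case 0
  then show ?case using assms(1) subgroup.one_closed by simp
next
  case (Suc n)
  then show ?case using assms subgroup.m_closed by simp
qed

theorem lemma2p3:
  fixes G (structure) and H :: "'a set" and x y :: 'a
  assumes "group G"
    and "finite (carrier G)"
    and "H \<lhd> G"
    and "cyclic_group (G Mod H)"
    and "x \<in> carrier G" and "y \<in> carrier G"
    and "group.ord (G Mod H) (H #> x) = group.ord (G Mod H) (H #> y)"
  shows "\<exists>\<sigma>. bij_betw \<sigma> (carrier G) (carrier G)
      \<and> (\<forall>K. subgroup K G \<longrightarrow> \<sigma> ` K = K)
      \<and> (\<forall>g1\<in>carrier G. \<forall>g2\<in>carrier G.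
            (\<sigma> g1 \<otimes> \<sigma> g2 = \<sigma> g2 \<otimes> \<sigma> g1) \<longleftrightarrow> (g1 \<otimes> g2 = g2 \<otimes> g1))
      \<and> (\<forall>C\<in>conj_classes G. \<sigma> ` C \<in> conj_classes G)
      \<and> \<sigma> ` (H #> x) = H #> y"
proof -
  interpret group G by fact
  interpret normal H G by fact
  interpret Q: group "G Mod H" by (rule factorgroup_is_group)
  have finQ: "finite (carrier (G Mod H))"
    using assms(2) by (simp add: carrier_FactGroup)
  obtain c where c: "c \<in> carrier (G Mod H)"
    and cQ: "carrier (G Mod H) = range (\<lambda>n::int. c [^]\<^bsub>G Mod H\<^esub> n)"
    using assms(4) Q.cyclic_group by blast
  define n where "n = Q.ord c"
  have n0: "n > 0" unfolding n_def using Q.ord_ge_1[OF finQ c] by linarith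
  have natpow: "\<exists>a::nat. Z = c [^]\<^bsub>G Mod H\<^esub> a" if "Z \<in> carrier (G Mod H)" for Z
  proof -
    from that have "Z \<in> range (\<lambda>n::int. c [^]\<^bsub>G Mod H\<^esub> n)" by (simp only: cQ)
    then obtain i :: int where i: "Z = c [^]\<^bsub>G Mod H\<^esub> i" by (rule rangeE)
    obtain a :: nat where "c [^]\<^bsub>G Mod H\<^esub> i = c [^]\<^bsub>G Mod H\<^esub> a"
      using Q.int_to_nat_pow[OF c] n0 unfolding n_def by blast
    then show ?thesis using i by blast
  qed
  have Xc: "H #> x \<in> carrier (G Mod H)" "H #> y \<in> carrier (G Mod H)"
    using assms(5,6) by (auto simp: carrier_FactGroup)
  obtain a :: nat where a: "H #> x = c [^]\<^bsub>G Mod H\<^esub> a" using natpow Xc(1) by blast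
  obtain b :: nat where b: "H #> y = c [^]\<^bsub>G Mod H\<^esub> b" using natpow Xc(2) by blast
  have ordp: "Q.ord (c [^]\<^bsub>G Mod H\<^esub> m) = n div gcd n m" for m :: nat
  proof -
    have "Q.ord (c [^]\<^bsub>G Mod H\<^esub> m) = (if m = 0 then 1 else n div gcd n m)"
      unfolding n_def by (rule Q.ord_pow_gen[OF c])
    then show ?thesis using n0 by (cases "m = 0") auto
  qed
  have "n div gcd n a = n div gcd n b" using assms(7) a b ordp by metis
  then have gab: "gcd n a = gcd n b"
  proof -
    assume q: "n div gcd n a = n div gcd n b"
    have e1: "gcd n a * (n div gcd n a) = n" by (rule dvd_mult_div_cancel) simp
    have e2: "gcd n b * (n div gcd n b) = n" by (rule dvd_mult_div_cancel) simp
    have "n div gcd n a \<noteq> 0" using e1 n0 by (metis mult_0_right less_irrefl)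
    then show ?thesis using e1 e2 q by (metis mult_right_cancel)
  qed
  define N where "N = order G"
  have N0: "N > 0" using assms(2) N_def order_gt_0_iff_finite by blast
  obtain k where k: "coprime k N" "[a * k = b] (mod n)"
    using exists_coprime_sol[OF n0 N0 gab] by blast
  obtain l where l: "[k * l = Suc 0] (mod N)" using cong_solve_coprime_nat[OF k(1)] by blast
  define \<sigma> where "\<sigma> = (\<lambda>g. g [^] k)"
  define \<tau> where "\<tau> = (\<lambda>g. g [^] l)"
  have st: "\<tau> (\<sigma> g) = g" if "g \<in> carrier G" for g
  proof -
    have "\<tau> (\<sigma> g) = g [^] (k * l)" unfolding \<sigma>_def \<tau>_def using that by (simp add: nat_pow_pow)
    also have "\<dots> = g [^] (Suc 0)" using pow_cong_order[OF that] l N_def by blast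
    finally show ?thesis using that by simp
  qed
  have ts: "\<sigma> (\<tau> g) = g" if "g \<in> carrier G" for g
  proof -
    have "\<sigma> (\<tau> g) = g [^] (k * l)" unfolding \<sigma>_def \<tau>_def using that
      by (simp add: nat_pow_pow mult.commute)
    also have "\<dots> = g [^] (Suc 0)" using pow_cong_order[OF that] l N_def by blast
    finally show ?thesis using that by simp
  qed
  have sc: "\<sigma> g \<in> carrier G" "\<tau> g \<in> carrier G" if "g \<in> carrier G" for g
    using that unfolding \<sigma>_def \<tau>_def by auto
  have bij: "bij_betw \<sigma> (carrier G) (carrier G)"
    by (rule bij_betw_byWitness[where f'=\<tau>]) (use st ts sc in auto)
  have sub: "\<sigma> ` K = K" if "subgroup K G" for K
  proof
    show "\<sigma> ` K \<subseteq> K" unfolding \<sigma>_def using that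
      by (auto intro: subgroup_nat_pow_mem)
    show "K \<subseteq> \<sigma> ` K"
    proof
      fix g assume g: "g \<in> K"
      have gG: "g \<in> carrier G" using g that subgroup.subset by blast
      have "\<tau> g \<in> K" unfolding \<tau>_def using that g by (auto intro: subgroup_nat_pow_mem)
      then show "g \<in> \<sigma> ` K" using ts[OF gG] by (metis image_eqI)
    qed
  qed
  have comm: "(\<sigma> g1 \<otimes> \<sigma> g2 = \<sigma> g2 \<otimes> \<sigma> g1) \<longleftrightarrow> (g1 \<otimes> g2 = g2 \<otimes> g1)"
    if "g1 \<in> carrier G" "g2 \<in> carrier G" for g1 g2
  proof
    assume "\<sigma> g1 \<otimes> \<sigma> g2 = \<sigma> g2 \<otimes> \<sigma> g1"
    then have "\<tau> (\<sigma> g1) \<otimes> \<tau> (\<sigma> g2) = \<tau> (\<sigma> g2) \<otimes> \<tau> (\<sigma> g1)"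
      unfolding \<tau>_def using pow_comm_both sc that by blast
    then show "g1 \<otimes> g2 = g2 \<otimes> g1" using st that by simp
  next
    assume "g1 \<otimes> g2 = g2 \<otimes> g1"
    then show "\<sigma> g1 \<otimes> \<sigma> g2 = \<sigma> g2 \<otimes> \<sigma> g1"
      unfolding \<sigma>_def using pow_comm_both that by blast
  qed
  have cc: "\<sigma> ` C \<in> conj_classes G" if "C \<in> conj_classes G" for C
  proof -
    have "\<exists>a. C = conj_class G a \<and> a \<in> carrier G"
      using that unfolding conj_classes_def mem_Collect_eq .
    then obtain u where u0: "C = conj_class G u" "u \<in> carrier G" by (elim exE conjE)
    have u: "u \<in> carrier G" "C = conj_class G u" using u0 by simp_all
    have cimg: "conj_class G v = (\<lambda>g. inv g \<otimes> v \<otimes> g) ` carrier G" for v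
      unfolding conj_class_def by (rule Setcompr_eq_image)
    have "\<sigma> ` C = (\<lambda>g. \<sigma> (inv g \<otimes> u \<otimes> g)) ` carrier G"
      unfolding u(2) cimg image_image ..
    also have "\<dots> = (\<lambda>g. inv g \<otimes> u [^] k \<otimes> g) ` carrier G"
      unfolding \<sigma>_def by (rule image_cong[OF refl], rule conj_pow[OF _ u(1)])
    also have "\<dots> = conj_class G (u [^] k)" unfolding cimg ..
    finally have "\<sigma> ` C = conj_class G (u [^] k)" .
    moreover have "u [^] k \<in> carrier G" using u(1) by (rule nat_pow_closed)
    ultimately show ?thesis unfolding conj_classes_def by (intro CollectI exI conjI)
  qed
  have "(H #> x) [^]\<^bsub>G Mod H\<^esub> k = c [^]\<^bsub>G Mod H\<^esub> (a * k)"
    using a c by (simp add: Q.nat_pow_pow)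
  also have "\<dots> = c [^]\<^bsub>G Mod H\<^esub> b" using Q.pow_cong_ord[OF c] k(2) unfolding n_def by blast
  finally have xk: "H #> (x [^] k) = H #> y" using rcos_pow assms(5) b by simp
  have HxG: "H #> x \<subseteq> carrier G" by (rule r_coset_subset_G[OF subset assms(5)])
  have HyG: "H #> y \<subseteq> carrier G" by (rule r_coset_subset_G[OF subset assms(6)])
  have img_sub: "\<sigma> ` (H #> x) \<subseteq> H #> y"
  proof
    fix z assume "z \<in> \<sigma> ` (H #> x)"
    then obtain w where w2: "z = \<sigma> w" and w1: "w \<in> H #> x" by (rule imageE)
    have wG: "w \<in> carrier G" using HxG w1 by (rule subsetD)
    have hw: "H #> w = H #> x" using repr_independence[OF w1 assms(5) subgroup_axioms] by (rule sym)
    have "H #> (w [^] k) = (H #> w) [^]\<^bsub>G Mod H\<^esub> k" by (rule rcos_pow[OF wG, symmetric])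
    also have "\<dots> = (H #> x) [^]\<^bsub>G Mod H\<^esub> k" unfolding hw ..
    also have "\<dots> = H #> (x [^] k)" by (rule rcos_pow[OF assms(5)])
    also have "\<dots> = H #> y" by (rule xk)
    finally have eqc: "H #> (w [^] k) = H #> y" .
    have wkG: "w [^] k \<in> carrier G" using wG by (rule nat_pow_closed)
    have "w [^] k \<in> H #> (w [^] k)" by (rule rcos_self[OF wkG subgroup_axioms])
    then show "z \<in> H #> y" unfolding w2 \<sigma>_def eqc .
  qed
  have "card (\<sigma> ` (H #> x)) = card (H #> x)"
    by (rule card_image[OF inj_on_subset[OF bij_betw_imp_inj_on[OF bij] HxG]])
  also have "\<dots> = card H" by (rule card_rcosets_equal[OF rcosetsI[OF subset assms(5)] subset, symmetric])
  also have "\<dots> = card (H #> y)" by (rule card_rcosets_equal[OF rcosetsI[OF subset assms(6)] subset])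
  finally have ceq: "card (\<sigma> ` (H #> x)) = card (H #> y)" .
  have finy: "finite (H #> y)" by (rule finite_subset[OF HyG assms(2)])
  have eq: "\<sigma> ` (H #> x) = H #> y" by (rule card_subset_eq[OF finy img_sub ceq])
  show ?thesis
  proof (intro exI[of _ \<sigma>] conjI allI impI ballI)
    show "bij_betw \<sigma> (carrier G) (carrier G)" by (rule bij)
    show "\<sigma> ` K = K" if "subgroup K G" for K using that by (rule sub)
    show "(\<sigma> g1 \<otimes> \<sigma> g2 = \<sigma> g2 \<otimes> \<sigma> g1) \<longleftrightarrow> (g1 \<otimes> g2 = g2 \<otimes> g1)"
      if "g1 \<in> carrier G" "g2 \<in> carrier G" for g1 g2 using that by (rule comm)
    show "\<sigma> ` C \<in> conj_classes G" if "C \<in> conj_classes G" for C using that by (rule cc)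
    show "\<sigma> ` (H #> x) = H #> y" by (rule eq)
  qed
qed

end
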